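(* Let $F$ be $(\ell,\omega)$-relatively smooth on $\mathcal X\cap\mathcal S$. For any $\rho>\ell$ and all $x\in\mathcal X\cap\mathcal S$, $$\rho^2D^{\mathrm{sym}}_\omega(\hat x,x^+)\le\frac{\ell}{\rho-\ell}\big(\Delta_\rho(x)+\Delta^+_\rho(x)\big).$$
   Context: Let $\mathcal X\subseteq\mathbb R^d$ be closed and convex, $\|\cdot\|$ a norm on $\mathbb R^d$. The problem is $\min_{x\in\mathcal X}\Phi(x):=F(x)+r(x)$, with $F$ differentiable and $r:\mathbb R^d\to\mathbb R$ convex, proper, lower semicontinuous. A DGF is $\omega:\mathrm{cl}(\mathcal S)\to\mathbb R$, $\mathcal S$ open with $\mathrm{ri}(\mathcal X)\subseteq\mathcal S$, $\omega$ continuously differentiable on $\mathcal S$ and $1$-strongly convex w.r.t. $\|\cdot\|$ on $\mathrm{cl}(\mathcal S)$; $D_\omega(x,y)=\omega(x)-\omega(y)-\langle\nabla\omega(y),x-y\rangle$, $D^{\mathrm{sym}}_\omega(x,y):=D_\omega(x,y)+D_\omega(y,x)$. For $\rho>0$ and $x\in\mathcal X\cap\mathcal S$: $\hat x:=\arg\min_{y\in\mathcal X}[\Phi(y)+\rho D_\omega(y,x)]$, $\Delta_\rho(x):=\rho^2D^{\mathrm{sym}}_\omega(\hat x,x)$; $x^+:=\arg\min_{y\in\mathcal X}[\langle\nabla F(x),y\rangle+r(y)+\rho D_\omega(y,x)]$, $\Delta^+_\rho(x):=\rho^2D^{\mathrm{sym}}_\omega(x^+,x)$ (minimizers assumed to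 exist). $F$ is $(\ell,\omega)$-relatively smooth on $\mathcal X\cap\mathcal S$ if for all $x,y\in\mathcal X\cap\mathcal S$: $-\ell D_\omega(x,y)\le F(x)-F(y)-\langle\nabla F(y),x-y\rangle\le\ell D_\omega(x,y)$. *)

theory Defs
  imports "HOL-Analysis.Analysis"
begin

definition is_norm :: "('a::real_vector \<Rightarrow> real) \<Rightarrow> bool" where
  "is_norm N \<longleftrightarrow> (\<forall>x. 0 \<le> N x) \<and> (\<forall>x. N x = 0 \<longleftrightarrow> x = 0)
     \<and> (\<forall>c x. N (c *\<^sub>R x) = \<bar>c\<bar> * N x) \<and> (\<forall>x y. N (x + y) \<le> N x + N y)"

definition lsc :: "('a::topological_space \<Rightarrow> real) \<Rightarrow> bool" where
  "lsc f \<longleftrightarrow> (\<forall>x. \<forall>e>0. \<forall>\<^sub>F y in at x. f x - e < f y)"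

definition strongly_convex_on :: "'a::real_vector set \<Rightarrow> ('a \<Rightarrow> real) \<Rightarrow> real \<Rightarrow> ('a \<Rightarrow> real) \<Rightarrow> bool" where
  "strongly_convex_on C N \<mu> f \<longleftrightarrow> convex C \<and>
     (\<forall>x\<in>C. \<forall>y\<in>C. \<forall>t\<in>{0..1}.
        f ((1 - t) *\<^sub>R x + t *\<^sub>R y) \<le> (1 - t) * f x + t * f y - \<mu> / 2 * t * (1 - t) * (N (x - y))\<^sup>2)"

definition bregman :: "('a::real_inner \<Rightarrow> real) \<Rightarrow> ('a \<Rightarrow> 'a) \<Rightarrow> 'a \<Rightarrow> 'a \<Rightarrow> real" where
  "bregman w gw x y = w x - w y - inner (gw y) (x - y)"

definition bregman_sym :: "('a::real_inner \<Rightarrow> real) \<Rightarrow> ('a \<Rightarrow> 'a) \<Rightarrow> 'a \<Rightarrow> 'a \<Rightarrow> real" where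
  "bregman_sym w gw x y = bregman w gw x y + bregman w gw y x"

definition is_DGF :: "'a::euclidean_space set \<Rightarrow> 'a set \<Rightarrow> ('a \<Rightarrow> real) \<Rightarrow> ('a \<Rightarrow> real) \<Rightarrow> ('a \<Rightarrow> 'a) \<Rightarrow> bool" where
  "is_DGF X S N w gw \<longleftrightarrow> open S \<and> rel_interior X \<subseteq> S
     \<and> (\<forall>x\<in>S. (w has_derivative (\<lambda>h. inner (gw x) h)) (at x))
     \<and> continuous_on S gw
     \<and> strongly_convex_on (closure S) N 1 w"

definition rel_smooth :: "('a::real_inner \<Rightarrow> real) \<Rightarrow> ('a \<Rightarrow> 'a) \<Rightarrow> real \<Rightarrow> ('a \<Rightarrow> real) \<Rightarrow> ('a \<Rightarrow> 'a) \<Rightarrow> 'a set \<Rightarrow> bool" where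
  "rel_smooth F gF l w gw A \<longleftrightarrow> (\<forall>x\<in>A. \<forall>y\<in>A.
      - l * bregman w gw x y \<le> F x - F y - inner (gF y) (x - y) \<and>
      F x - F y - inner (gF y) (x - y) \<le> l * bregman w gw x y)"

definition is_prox_point :: "'a set \<Rightarrow> ('a \<Rightarrow> real) \<Rightarrow> ('a::real_inner \<Rightarrow> real) \<Rightarrow> ('a \<Rightarrow> 'a) \<Rightarrow> real \<Rightarrow> 'a \<Rightarrow> 'a \<Rightarrow> bool" where
  "is_prox_point X Phi w gw \<rho> x xh \<longleftrightarrow> xh \<in> X \<and>
     (\<forall>y\<in>X. Phi xh + \<rho> * bregman w gw xh x \<le> Phi y + \<rho> * bregman w gw y x)"

definition is_prox_grad_point :: "'a set \<Rightarrow> ('a \<Rightarrow> 'a) \<Rightarrow> ('a \<Rightarrow> real) \<Rightarrow> ('a::real_inner \<Rightarrow> real) \<Rightarrow> ('a \<Rightarrow> 'a) \<Rightarrow> real \<Rightarrow> 'a \<Rightarrow> 'a \<Rightarrow> bool" where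
  "is_prox_grad_point X gF r w gw \<rho> x xp \<longleftrightarrow> xp \<in> X \<and>
     (\<forall>y\<in>X. inner (gF x) xp + r xp + \<rho> * bregman w gw xp x
             \<le> inner (gF x) y + r y + \<rho> * bregman w gw y x)"

end

theory Submission
  imports Defs
begin

lemma foc:
  fixes G r :: "'a::real_inner \<Rightarrow> real"
  assumes G: "(G has_derivative (\<lambda>h. inner g h)) (at z)"
    and r: "convex_on UNIV r" and X: "convex X" and z: "z \<in> X" and y: "y \<in> X"
    and mn: "\<forall>u\<in>X. G z + r z \<le> G u + r u"
  shows "0 \<le> r y - r z + inner g (y - z)"
proof -
  define d where "d = y - z"
  define \<phi> where "\<phi> t = G (z + t *\<^sub>R d)" for t :: real
  have l: "((\<lambda>t::real. z + t *\<^sub>R d) has_derivative (\<lambda>t. t *\<^sub>R d)) (at 0 within {0<..})"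
    by (auto intro!: derivative_eq_intros)
  have G0: "(G has_derivative (\<lambda>h. inner g h)) (at (z + 0 *\<^sub>R d))" using G by simp
  have "((\<lambda>t. G (z + t *\<^sub>R d)) has_derivative (\<lambda>t. inner g (t *\<^sub>R d))) (at 0 within {0<..})"
    using has_derivative_compose[OF l G0] .
  moreover have "(\<lambda>t. inner g (t *\<^sub>R d)) = (*) (inner g d)" by (auto simp: mult.commute)
  ultimately have "(\<phi> has_field_derivative inner g d) (at 0 within {0<..})"
    unfolding has_field_derivative_def \<phi>_def by simp
  hence lim: "((\<lambda>t. (\<phi> t - \<phi> 0) / (t - 0)) \<longlongrightarrow> inner g d) (at_right 0)"
    using has_field_derivative_iff by blast
  have ev: "\<forall>\<^sub>F t in at_right (0::real). r z - r y \<le> (\<phi> t - \<phi> 0) / (t - 0)"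
    unfolding eventually_at_right[of 0 1, OF zero_less_one]
  proof (intro exI[of _ 1] conjI allI impI)
    fix t :: real assume t: "0 < t" "t < 1"
    have eq: "z + t *\<^sub>R d = (1 - t) *\<^sub>R z + t *\<^sub>R y" by (simp add: d_def algebra_simps)
    have uX: "z + t *\<^sub>R d \<in> X" unfolding eq using convexD[OF X z y, of "1-t" t] t by simp
    have cv: "r (z + t *\<^sub>R d) \<le> (1 - t) * r z + t * r y"
      unfolding eq using convex_onD[OF r, of t z y] t by simp
    have "G z + r z \<le> \<phi> t + r (z + t *\<^sub>R d)" using mn uX by (simp add: \<phi>_def)
    hence "t * (r z - r y) \<le> \<phi> t - \<phi> 0" using cv by (simp add: \<phi>_def algebra_simps)
    thus "r z - r y \<le> (\<phi> t - \<phi> 0) / (t - 0)" using t by (simp add: field_simps)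
  qed simp
  have "r z - r y \<le> inner g d"
    by (rule tendsto_lowerbound[OF lim ev]) simp
  thus ?thesis by (simp add: d_def)
qed

theorem lemma4:
  fixes X S :: "'a::euclidean_space set"
    and N :: "'a \<Rightarrow> real"
    and F r w :: "'a \<Rightarrow> real"
    and gF gw :: "'a \<Rightarrow> 'a"
    and l \<rho> :: real
    and x xh xp :: 'a
  assumes X: "closed X" "convex X"
    and N: "is_norm N"
    and F: "\<And>z. (F has_derivative (\<lambda>h. inner (gF z) h)) (at z)"
    and r: "convex_on UNIV r" "lsc r"
    and w: "is_DGF X S N w gw"
    and smooth: "rel_smooth F gF l w gw (X \<inter> S)"
    and rho: "\<rho> > l"
    and x: "x \<in> X \<inter> S"
    and xh: "is_prox_point X (\<lambda>y. F y + r y) w gw \<rho> x xh" "xh \<in> S"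
    and xp: "is_prox_grad_point X gF r w gw \<rho> x xp" "xp \<in> S"
  shows "\<rho>\<^sup>2 * bregman_sym w gw xh xp
           \<le> l / (\<rho> - l) * (\<rho>\<^sup>2 * bregman_sym w gw xh x + \<rho>\<^sup>2 * bregman_sym w gw xp x)"
proof -
  have dw: "\<And>z. z \<in> S \<Longrightarrow> (w has_derivative (\<lambda>h. inner (gw z) h)) (at z)"
    using w by (auto simp: is_DGF_def)
  have xhX: "xh \<in> X" and xpX: "xp \<in> X" using xh xp
    by (auto simp: is_prox_point_def is_prox_grad_point_def)
  define B where "B = bregman w gw"
  have Gh: "((\<lambda>y. F y + \<rho> * B y x) has_derivative (\<lambda>h. inner (gF xh + \<rho> *\<^sub>R (gw xh - gw x)) h)) (at xh)"
    unfolding B_def bregman_def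
    by (rule has_derivative_eq_rhs, (rule derivative_eq_intros F dw[OF xh(2)] | simp)+)
       (auto simp: inner_add_left inner_diff_left algebra_simps)
  have A: "0 \<le> r xp - r xh + inner (gF xh + \<rho> *\<^sub>R (gw xh - gw x)) (xp - xh)"
    apply (rule foc[OF Gh r(1) X(2) xhX xpX])
    using xh(1) by (auto simp: is_prox_point_def B_def algebra_simps)
  have Gp: "((\<lambda>y. inner (gF x) y + \<rho> * B y x) has_derivative (\<lambda>h. inner (gF x + \<rho> *\<^sub>R (gw xp - gw x)) h)) (at xp)"
    unfolding B_def bregman_def
    by (rule has_derivative_eq_rhs, (rule derivative_eq_intros dw[OF xp(2)] | simp)+)
       (auto simp: inner_add_left inner_diff_left algebra_simps)
  have Bp: "0 \<le> r xh - r xp + inner (gF x + \<rho> *\<^sub>R (gw xp - gw x)) (xh - xp)"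
    apply (rule foc[OF Gp r(1) X(2) xpX xhX])
    using xp(1) by (auto simp: is_prox_grad_point_def B_def algebra_simps)
  have sum: "\<rho> * bregman_sym w gw xh xp \<le> inner (gF xh - gF x) (xp - xh)"
    using add_mono[OF A Bp]
    by (simp add: bregman_sym_def bregman_def inner_add_left inner_diff_left inner_diff_right algebra_simps)
  define E where "E a b = F a - F b - inner (gF b) (a - b)" for a b
  have hS: "xh \<in> X \<inter> S" "xp \<in> X \<inter> S" using xhX xpX xh xp by auto
  have sm: "\<And>a b. a \<in> X \<inter> S \<Longrightarrow> b \<in> X \<inter> S \<Longrightarrow> - l * B a b \<le> E a b \<and> E a b \<le> l * B a b"
    using smooth unfolding rel_smooth_def E_def B_def by blast
  have key: "inner (gF xh - gF x) (xp - xh) = - E xp xh + E xp x - E xh x"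
    by (simp add: E_def inner_diff_left inner_diff_right algebra_simps)
  have e1: "- E xp xh \<le> l * B xp xh" using sm[OF hS(2) hS(1)] by linarith
  have e2: "E xp x \<le> l * B xp x" using sm[OF hS(2) x] by linarith
  have e3: "- E xh x \<le> l * B xh x" using sm[OF hS(1) x] by linarith
  have p1: "0 \<le> l * B xh xp" using sm[OF hS(1) hS(2)] by linarith
  have p2: "0 \<le> l * B x xp" using sm[OF x hS(2)] by linarith
  have p3: "0 \<le> l * B x xh" using sm[OF x hS(1)] by linarith
  have "\<rho> * bregman_sym w gw xh xp \<le> l * bregman_sym w gw xh xp
        + l * (bregman_sym w gw xh x + bregman_sym w gw xp x)"
    using sum key e1 e2 e3 p1 p2 p3
    by (simp add: bregman_sym_def B_def algebra_simps)
  hence "(\<rho> - l) * bregman_sym w gw xh xp \<le> l * (bregman_sym w gw xh x + bregman_sym w gw xp x)"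
    by (simp add: algebra_simps)
  hence "bregman_sym w gw xh xp \<le> l / (\<rho> - l) * (bregman_sym w gw xh x + bregman_sym w gw xp x)"
    using rho by (simp add: field_simps)
  hence "\<rho>\<^sup>2 * bregman_sym w gw xh xp \<le> \<rho>\<^sup>2 * (l / (\<rho> - l) * (bregman_sym w gw xh x + bregman_sym w gw xp x))"
    by (rule mult_left_mono) simp
  thus ?thesis by (simp add: algebra_simps)
qed

end
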